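(* Let $\mathcal{F}$ be an $N$-dimensional commutative algebra with basis $e_1,\dots,e_N$ and structure constants $a^k_{ij}$, such that $e_1$ is a unity element and $\mathcal{F}$ carries a non-degenerate symmetric inner product $\langle\,,\rangle$ with components $\eta_{ij}$ satisfying the Frobenius condition $\langle a\circ b,c\rangle=\langle a,b\circ c\rangle$. Define $h^{(1)}=\eta_{1p}u^p$ and recursively $h^{(n+1)}=a^i_{jk}u^ju^k\,\partial h^{(n)}/\partial u^i$ for $n\ge1$. Then $\mathcal{F}$ is a Jordan algebra if and only if $h^{(n)}$ is a conserved density for every $n\ge 1$.
   Context: Summation over repeated indices is understood; indices are raised and lowered with $\eta_{ij}$ and its inverse. A conserved density is a function $h(u^1,\dots,u^N)$ satisfying, for all $k,p$, $a^i_{jk}u^j\,\partial^2 h/\partial u^i\partial u^p=a^i_{jp}u^j\,\partial^2 h/\partial u^i\partial u^k$. A commutative algebra is Jordan if $(x\circ y)\circ(x\circ x)=x\circ(y\circ(x\circ x))$ for all $x,y$. *)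

theory Defs
  imports "HOL-Analysis.Analysis"
begin

text \<open>Structure constants: a k i j stands for a^k_{ij} (upper index first).
  Coordinates u = (u^1,...,u^N) are vectors real^'n; the basis index set is the finite type 'n.\<close>

definition alg_mult :: "('n::finite \<Rightarrow> 'n \<Rightarrow> 'n \<Rightarrow> real) \<Rightarrow> real^'n \<Rightarrow> real^'n \<Rightarrow> real^'n" where
  "alg_mult a x y = (\<chi> k. \<Sum>i\<in>UNIV. \<Sum>j\<in>UNIV. a k i j * x$i * y$j)"

definition is_jordan :: "('n::finite \<Rightarrow> 'n \<Rightarrow> 'n \<Rightarrow> real) \<Rightarrow> bool" where
  "is_jordan a \<longleftrightarrow> (\<forall>x y. alg_mult a (alg_mult a x y) (alg_mult a x x)
                       = alg_mult a x (alg_mult a y (alg_mult a x x)))"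

definition pdiff :: "'n::finite \<Rightarrow> (real^'n \<Rightarrow> real) \<Rightarrow> real^'n \<Rightarrow> real" where
  "pdiff i f u = deriv (\<lambda>t. f (u + t *\<^sub>R axis i 1)) 0"

definition conserved_density :: "('n::finite \<Rightarrow> 'n \<Rightarrow> 'n \<Rightarrow> real) \<Rightarrow> (real^'n \<Rightarrow> real) \<Rightarrow> bool" where
  "conserved_density a h \<longleftrightarrow> (\<forall>u k p.
     (\<Sum>i\<in>UNIV. \<Sum>j\<in>UNIV. a i j k * u$j * pdiff i (pdiff p h) u)
   = (\<Sum>i\<in>UNIV. \<Sum>j\<in>UNIV. a i j p * u$j * pdiff i (pdiff k h) u))"

text \<open>The densities h^(n), n \<ge> 1 (h^(0) is an unused dummy).\<close>
fun hdens :: "('n::finite \<Rightarrow> 'n \<Rightarrow> 'n \<Rightarrow> real) \<Rightarrow> ('n \<Rightarrow> 'n \<Rightarrow> real) \<Rightarrow> 'n \<Rightarrow> nat \<Rightarrow> real^'n \<Rightarrow> real" where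
  "hdens a \<eta> e1 0 = (\<lambda>u. 0)"
| "hdens a \<eta> e1 (Suc 0) = (\<lambda>u. \<Sum>p\<in>UNIV. \<eta> e1 p * u$p)"
| "hdens a \<eta> e1 (Suc (Suc n)) = (\<lambda>u. \<Sum>i\<in>UNIV. \<Sum>j\<in>UNIV. \<Sum>k\<in>UNIV.
        a i j k * u$j * u$k * pdiff i (hdens a \<eta> e1 (Suc n)) u)"

end

theory Submission
  imports Defs
begin
abbreviation "mm a \<equiv> alg_mult a"

definition ipf :: "('n::finite \<Rightarrow> 'n \<Rightarrow> real) \<Rightarrow> real^'n \<Rightarrow> real^'n \<Rightarrow> real" where
  "ipf \<eta> x y = (\<Sum>i\<in>UNIV. \<Sum>j\<in>UNIV. \<eta> i j * x$i * y$j)"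

lemma m_add_left: "alg_mult a (x + y) z = alg_mult a x z + alg_mult a y z"
  by (simp add: alg_mult_def vec_eq_iff sum.distrib algebra_simps)
lemma m_add_right: "alg_mult a z (x + y) = alg_mult a z x + alg_mult a z y"
  by (simp add: alg_mult_def vec_eq_iff sum.distrib algebra_simps)
lemma m_scale_left: "alg_mult a (c *\<^sub>R x) z = c *\<^sub>R alg_mult a x z"
  by (simp add: alg_mult_def vec_eq_iff sum_distrib_left algebra_simps)
lemma m_scale_right: "alg_mult a z (c *\<^sub>R x) = c *\<^sub>R alg_mult a z x"
  by (simp add: alg_mult_def vec_eq_iff sum_distrib_left algebra_simps)

lemma m_bilinear: "bilinear (alg_mult a)"
  unfolding bilinear_def by (auto intro!: linearI simp: m_add_left m_add_right m_scale_left m_scale_right)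
lemma m_bb: "bounded_bilinear (alg_mult a)"
  using m_bilinear bilinear_conv_bounded_bilinear by blast

lemma ip_add_left: "ipf \<eta> (x + y) z = ipf \<eta> x z + ipf \<eta> y z"
  by (simp add: ipf_def sum.distrib algebra_simps)
lemma ip_add_right: "ipf \<eta> z (x + y) = ipf \<eta> z x + ipf \<eta> z y"
  by (simp add: ipf_def sum.distrib algebra_simps)
lemma ip_scale_left: "ipf \<eta> (c *\<^sub>R x) z = c * ipf \<eta> x z"
  by (simp add: ipf_def sum_distrib_left algebra_simps)
lemma ip_scale_right: "ipf \<eta> z (c *\<^sub>R x) = c * ipf \<eta> z x"
  by (simp add: ipf_def sum_distrib_left algebra_simps)
lemma ip_bilinear: "bilinear (ipf \<eta>)"
  unfolding bilinear_def by (auto intro!: linearI simp: ip_add_left ip_add_right ip_scale_left ip_scale_right)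
lemma ip_bb: "bounded_bilinear (ipf \<eta>)"
  using ip_bilinear bilinear_conv_bounded_bilinear by blast

lemma pdiff_eq:
  assumes "(f has_derivative f') (at u)"
  shows "pdiff i f u = f' (axis i 1)"
proof -
  have l: "linear f'" using assms has_derivative_linear by blast
  have "((\<lambda>t. u + t *\<^sub>R axis i 1) has_derivative (\<lambda>t. t *\<^sub>R axis i 1)) (at 0)"
    by (auto intro!: derivative_eq_intros)
  from has_derivative_compose[OF this] assms
  have "((\<lambda>t. f (u + t *\<^sub>R axis i 1)) has_derivative (\<lambda>t. f' (t *\<^sub>R axis i 1))) (at 0)" by simp
  moreover have "(\<lambda>t. f' (t *\<^sub>R axis i 1)) = (\<lambda>t. f' (axis i 1) * t)"
    using l by (simp add: linear_scale mult.commute)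
  ultimately have "((\<lambda>t. f (u + t *\<^sub>R axis i 1)) has_field_derivative f' (axis i 1)) (at 0)"
    by (simp add: has_field_derivative_def)
  thus ?thesis unfolding pdiff_def by (rule DERIV_imp_deriv)
qed

lemma lin_sum:
  fixes F :: "real^'n::finite \<Rightarrow> real"
  assumes "linear F"
  shows "(\<Sum>i\<in>UNIV. v$i * F (axis i 1)) = F v"
proof -
  have "F v = F (\<Sum>i\<in>UNIV. v$i *\<^sub>R axis i 1)"
    using basis_expansion[of v] by (simp add: scalar_mult_eq_scaleR)
  also have "\<dots> = (\<Sum>i\<in>UNIV. v$i * F (axis i 1))"
    using assms by (simp add: linear_sum linear_scale)
  finally show ?thesis by simp
qed

lemma comp_mult: "(alg_mult a x y)$i = (\<Sum>j\<in>UNIV. \<Sum>k\<in>UNIV. a i j k * x$j * y$k)"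
  by (simp add: alg_mult_def)

lemma comp_axis: "(alg_mult a u (axis k 1))$i = (\<Sum>j\<in>UNIV. a i j k * u$j)"
  by (simp add: alg_mult_def axis_def if_distrib cong: if_cong)

lemma cons_sum: "(\<Sum>i\<in>UNIV. \<Sum>j\<in>UNIV. a i j k * u$j * X i) = (\<Sum>i\<in>UNIV. (alg_mult a u (axis k 1))$i * X i)"
  by (simp add: comp_axis sum_distrib_right)

lemma h_sum: "(\<Sum>i\<in>UNIV. \<Sum>j\<in>UNIV. \<Sum>k\<in>UNIV. a i j k * u$j * u$k * X i) = (\<Sum>i\<in>UNIV. (alg_mult a u u)$i * X i)"
  by (simp add: comp_mult sum_distrib_right)

lemma axis_sum: "(\<Sum>i\<in>UNIV. (axis e 1 :: real^'n::finite)$i * f i) = f e"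
proof -
  have "(\<Sum>i\<in>UNIV. (axis e 1 :: real^'n::finite)$i * f i) = (\<Sum>i\<in>UNIV. if i = e then f i else 0)"
    by (rule sum.cong) (auto simp: axis_def)
  thus ?thesis by simp
qed

lemma axis_sum': "(\<Sum>i\<in>UNIV. f i * (axis e 1 :: real^'n::finite)$i) = f e"
  using axis_sum[of e f] by (simp add: mult.commute)

lemma sum4: "(\<Sum>l\<in>A. \<Sum>k\<in>B. \<Sum>i\<in>C. \<Sum>j\<in>D. f l k i j) = (\<Sum>i\<in>C. \<Sum>j\<in>D. \<Sum>k\<in>B. \<Sum>l\<in>A. f l k i j)"
proof -
  have "(\<Sum>l\<in>A. \<Sum>k\<in>B. \<Sum>i\<in>C. \<Sum>j\<in>D. f l k i j) = (\<Sum>l\<in>A. \<Sum>i\<in>C. \<Sum>k\<in>B. \<Sum>j\<in>D. f l k i j)"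
    by (rule sum.cong[OF refl], rule sum.swap)
  also have "\<dots> = (\<Sum>l\<in>A. \<Sum>i\<in>C. \<Sum>j\<in>D. \<Sum>k\<in>B. f l k i j)"
    by (rule sum.cong[OF refl], rule sum.cong[OF refl], rule sum.swap)
  also have "\<dots> = (\<Sum>i\<in>C. \<Sum>l\<in>A. \<Sum>j\<in>D. \<Sum>k\<in>B. f l k i j)"
    by (rule sum.swap)
  also have "\<dots> = (\<Sum>i\<in>C. \<Sum>j\<in>D. \<Sum>l\<in>A. \<Sum>k\<in>B. f l k i j)"
    by (rule sum.cong[OF refl], rule sum.swap)
  also have "\<dots> = (\<Sum>i\<in>C. \<Sum>j\<in>D. \<Sum>k\<in>B. \<Sum>l\<in>A. f l k i j)"
    by (rule sum.cong[OF refl], rule sum.cong[OF refl], rule sum.swap)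
  finally show ?thesis .
qed

lemma sum3: "(\<Sum>l\<in>A. \<Sum>j\<in>B. \<Sum>k\<in>C. f l j k) = (\<Sum>j\<in>B. \<Sum>k\<in>C. \<Sum>l\<in>A. f l j k)"
proof -
  have "(\<Sum>l\<in>A. \<Sum>j\<in>B. \<Sum>k\<in>C. f l j k) = (\<Sum>j\<in>B. \<Sum>l\<in>A. \<Sum>k\<in>C. f l j k)"
    by (rule sum.swap)
  also have "\<dots> = (\<Sum>j\<in>B. \<Sum>k\<in>C. \<Sum>l\<in>A. f l j k)"
    by (rule sum.cong[OF refl], rule sum.swap)
  finally show ?thesis .
qed

locale falg =
  fixes a :: "'n::finite \<Rightarrow> 'n \<Rightarrow> 'n \<Rightarrow> real" and \<eta> :: "'n \<Rightarrow> 'n \<Rightarrow> real" and e1 :: 'n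
  assumes comm: "\<forall>k i j. a k i j = a k j i"
    and unity: "\<forall>k j. a k e1 j = (if k = j then 1 else 0)"
    and sym: "\<forall>i j. \<eta> i j = \<eta> j i"
    and frob: "\<forall>i j k. (\<Sum>l\<in>UNIV. a l i j * \<eta> l k) = (\<Sum>l\<in>UNIV. \<eta> i l * a l j k)"
begin

abbreviation "m \<equiv> alg_mult a"
abbreviation "ip \<equiv> ipf \<eta>"
abbreviation "E \<equiv> (axis e1 1 :: real^'n)"

lemma mcomm: "m x y = m y x"
  unfolding alg_mult_def vec_eq_iff
  by (simp, subst sum.swap, simp add: comm mult_ac)

lemma munit: "m E y = y"
proof -
  have "(\<Sum>i\<in>UNIV. \<Sum>j\<in>UNIV. a k i j * E$i * y$j) = y$k" for k
  proof -
    have "(\<Sum>i\<in>UNIV. \<Sum>j\<in>UNIV. a k i j * E$i * y$j) = (\<Sum>i\<in>UNIV. E$i * (\<Sum>j\<in>UNIV. a k i j * y$j))"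
      by (simp add: sum_distrib_left mult_ac)
    also have "\<dots> = (\<Sum>j\<in>UNIV. a k e1 j * y$j)" by (rule axis_sum)
    also have "\<dots> = (\<Sum>j\<in>UNIV. if k = j then y$j else 0)" by (rule sum.cong) (auto simp: unity)
    finally show ?thesis by simp
  qed
  thus ?thesis by (simp add: alg_mult_def vec_eq_iff)
qed

lemma ipsym: "ip x y = ip y x"
  unfolding ipf_def by (subst sum.swap, simp add: sym mult_ac)

lemma frobv: "ip (m x y) z = ip x (m y z)"
proof -
  have "ip (m x y) z = (\<Sum>l\<in>UNIV. \<Sum>k\<in>UNIV. \<Sum>i\<in>UNIV. \<Sum>j\<in>UNIV. x$i * y$j * z$k * (a l i j * \<eta> l k))"
    by (simp add: ipf_def alg_mult_def sum_distrib_left sum_distrib_right mult_ac)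
  also have "\<dots> = (\<Sum>i\<in>UNIV. \<Sum>j\<in>UNIV. \<Sum>k\<in>UNIV. \<Sum>l\<in>UNIV. x$i * y$j * z$k * (a l i j * \<eta> l k))"
    by (rule sum4)
  also have "\<dots> = (\<Sum>i\<in>UNIV. \<Sum>j\<in>UNIV. \<Sum>k\<in>UNIV. x$i * y$j * z$k * (\<Sum>l\<in>UNIV. a l i j * \<eta> l k))"
    by (simp add: sum_distrib_left)
  also have "\<dots> = (\<Sum>i\<in>UNIV. \<Sum>j\<in>UNIV. \<Sum>k\<in>UNIV. x$i * y$j * z$k * (\<Sum>l\<in>UNIV. \<eta> i l * a l j k))"
    using frob by simp
  also have "\<dots> = (\<Sum>i\<in>UNIV. \<Sum>j\<in>UNIV. \<Sum>k\<in>UNIV. \<Sum>l\<in>UNIV. x$i * y$j * z$k * (\<eta> i l * a l j k))"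
    by (simp add: sum_distrib_left)
  also have "\<dots> = (\<Sum>i\<in>UNIV. \<Sum>l\<in>UNIV. \<Sum>j\<in>UNIV. \<Sum>k\<in>UNIV. x$i * y$j * z$k * (\<eta> i l * a l j k))"
    by (rule sum.cong[OF refl], rule sum3[symmetric])
  also have "\<dots> = ip x (m y z)"
    by (simp add: ipf_def alg_mult_def sum_distrib_left sum_distrib_right mult_ac)
  finally show ?thesis .
qed

lemma ip_unit: "ip E x = (\<Sum>p\<in>UNIV. \<eta> e1 p * x$p)"
proof -
  have "ip E x = (\<Sum>i\<in>UNIV. E$i * (\<Sum>j\<in>UNIV. \<eta> i j * x$j))"
    by (simp add: ipf_def sum_distrib_left mult_ac)
  also have "\<dots> = (\<Sum>p\<in>UNIV. \<eta> e1 p * x$p)" by (rule axis_sum)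
  finally show ?thesis .
qed

end

lemma m_diff_left: "alg_mult a (x - y) z = alg_mult a x z - alg_mult a y z"
  by (simp add: alg_mult_def vec_eq_iff sum_subtractf algebra_simps)
lemma m_diff_right: "alg_mult a z (x - y) = alg_mult a z x - alg_mult a z y"
  by (simp add: alg_mult_def vec_eq_iff sum_subtractf algebra_simps)
lemma m_zero_left: "alg_mult a 0 z = 0"
  by (simp add: alg_mult_def vec_eq_iff)
lemma m_zero_right: "alg_mult a z 0 = 0"
  by (simp add: alg_mult_def vec_eq_iff)
lemma ip_zero_left: "ipf \<eta> 0 z = 0"
  by (simp add: ipf_def)
lemma ip_zero_right: "ipf \<eta> z 0 = 0"
  by (simp add: ipf_def)
lemma ip_diff_left: "ipf \<eta> (x - y) z = ipf \<eta> x z - ipf \<eta> y z"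
  by (simp add: ipf_def sum_subtractf algebra_simps)
lemma ip_diff_right: "ipf \<eta> z (x - y) = ipf \<eta> z x - ipf \<eta> z y"
  by (simp add: ipf_def sum_subtractf algebra_simps)

fun apow :: "('n::finite \<Rightarrow> 'n \<Rightarrow> 'n \<Rightarrow> real) \<Rightarrow> 'n \<Rightarrow> real^'n \<Rightarrow> nat \<Rightarrow> real^'n" where
  "apow a e1 u 0 = axis e1 1"
| "apow a e1 u (Suc k) = alg_mult a u (apow a e1 u k)"

fun aP :: "('n::finite \<Rightarrow> 'n \<Rightarrow> 'n \<Rightarrow> real) \<Rightarrow> 'n \<Rightarrow> nat \<Rightarrow> real^'n \<Rightarrow> real^'n \<Rightarrow> real^'n" where
  "aP a e1 0 u y = 0"
| "aP a e1 (Suc k) u y = alg_mult a y (apow a e1 u k) + alg_mult a u (aP a e1 k u y)"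

lemma apow_deriv: "((\<lambda>u. apow a e1 u k) has_derivative aP a e1 k u) (at u)"
proof (induction k)
  case 0
  then show ?case by (simp add: has_derivative_const[unfolded] )
next
  case (Suc k)
  have "((\<lambda>v. alg_mult a v (apow a e1 v k)) has_derivative
      (\<lambda>h. alg_mult a u (aP a e1 k u h) + alg_mult a h (apow a e1 u k))) (at u)"
    by (rule bounded_bilinear.FDERIV[OF m_bb has_derivative_ident Suc])
  moreover have "(\<lambda>u. apow a e1 u (Suc k)) = (\<lambda>v. alg_mult a v (apow a e1 v k))" by simp
  moreover have "aP a e1 (Suc k) u = (\<lambda>h. alg_mult a u (aP a e1 k u h) + alg_mult a h (apow a e1 u k))"
    by (simp add: fun_eq_iff add.commute)
  ultimately show ?case by simp
qed

lemma aP_linear: "linear (aP a e1 k u)"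
  using apow_deriv has_derivative_linear by blast

lemma pdiff_fun:
  assumes "\<And>u. (f has_derivative F u) (at u)"
  shows "pdiff i f = (\<lambda>u. F u (axis i 1))"
  using pdiff_eq[OF assms] by auto

lemma hstep:
  assumes "\<And>u. (hdens a \<eta> e1 (Suc n) has_derivative F u) (at u)"
  shows "hdens a \<eta> e1 (Suc (Suc n)) = (\<lambda>u. F u (alg_mult a u u))"
proof
  fix u
  have "hdens a \<eta> e1 (Suc (Suc n)) u = (\<Sum>i\<in>UNIV. (alg_mult a u u)$i * pdiff i (hdens a \<eta> e1 (Suc n)) u)"
    by (simp only: hdens.simps h_sum)
  also have "\<dots> = (\<Sum>i\<in>UNIV. (alg_mult a u u)$i * F u (axis i 1))"
    using pdiff_eq[OF assms] by simp
  also have "\<dots> = F u (alg_mult a u u)"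
    by (rule lin_sum) (use assms has_derivative_linear in blast)
  finally show "hdens a \<eta> e1 (Suc (Suc n)) u = F u (alg_mult a u u)" .
qed

lemma cstep:
  assumes "\<And>u. (pdiff p h has_derivative G u) (at u)"
  shows "(\<Sum>i\<in>UNIV. \<Sum>j\<in>UNIV. a i j k * u$j * pdiff i (pdiff p h) u) = G u (alg_mult a u (axis k 1))"
proof -
  have "(\<Sum>i\<in>UNIV. \<Sum>j\<in>UNIV. a i j k * u$j * pdiff i (pdiff p h) u)
     = (\<Sum>i\<in>UNIV. (alg_mult a u (axis k 1))$i * G u (axis i 1))"
    using cons_sum[of a k u "\<lambda>i. pdiff i (pdiff p h) u"] by (simp add: pdiff_eq[OF assms])
  also have "\<dots> = G u (alg_mult a u (axis k 1))"
    by (rule lin_sum) (use assms has_derivative_linear in blast)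
  finally show ?thesis .
qed

lemma lin_ext:
  fixes f g :: "real^'n::finite \<Rightarrow> real^'m::finite"
  assumes "linear f" "linear g" "\<And>i. f (axis i 1) = g (axis i 1)"
  shows "f x = g x"
proof -
  have x: "x = (\<Sum>i\<in>UNIV. x$i *\<^sub>R axis i 1)"
    using basis_expansion[of x] by (simp add: scalar_mult_eq_scaleR)
  have "f x = f (\<Sum>i\<in>UNIV. x$i *\<^sub>R axis i 1)" using x by simp
  also have "\<dots> = (\<Sum>i\<in>UNIV. x$i *\<^sub>R g (axis i 1))" by (simp add: assms linear_sum linear_scale)
  also have "\<dots> = g (\<Sum>i\<in>UNIV. x$i *\<^sub>R axis i 1)" by (simp add: assms linear_sum linear_scale)
  finally show ?thesis using x by simp
qed

context falg begin

lemma selfadj: "ip (m u x) y = ip x (m u y)"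
  by (metis frobv mcomm)

lemma frob_rev: "ip x (m y z) = ip (m x y) z"
  by (simp add: frobv)

lemma apow1: "apow a e1 u (Suc 0) = u"
  using munit[of u] mcomm[of u E] by simp

lemma euler: "aP a e1 k u u = real k *\<^sub>R apow a e1 u k"
  by (induction k) (auto simp: m_add_right m_scale_right algebra_simps mcomm)

end

locale jalg = falg +
  assumes jord: "is_jordan a"
begin

lemma JL: "m (m u u) (m u y) = m u (m (m u u) y)"
  using jord unfolding is_jordan_def by (metis mcomm)

lemma polar: "m (m w (m x x)) z = m (m x x) (m w z) + m (m x w) (m x z) + m (m x w) (m x z) - m x (m w (m x z)) - m x (m w (m x z))"
proof -
  define J where "J x y = m (m x y) (m x x) - m x (m y (m x x))" for x y
  have J0: "J x y = 0" for x y using jord unfolding is_jordan_def J_def by simp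
  define B where "B = m (m z w) (m x x) + m (m x w) (m x z) + m (m x w) (m x z) - m z (m w (m x x)) - m x (m w (m x z)) - m x (m w (m x z))"
  have "J (x + z) w - J (x - z) w = B + B + J z w + J z w"
    unfolding J_def B_def
    apply (simp only: m_add_left m_add_right m_diff_left m_diff_right mcomm[of z x] mcomm[of w x] mcomm[of w z])
    by (simp add: algebra_simps)
  hence "B + B = 0" using J0 by simp
  hence "(2::real) *\<^sub>R B = 0" by (simp only: scaleR_2)
  hence "B = 0" by simp
  moreover have "m (m w (m x x)) z = m z (m w (m x x))" by (rule mcomm)
  moreover have "m (m z w) (m x x) = m (m x x) (m w z)" using mcomm[of z w] mcomm[of "m w z" "m x x"] by simp
  ultimately show ?thesis unfolding B_def by (simp add: algebra_simps)
qed
end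

context jalg begin

abbreviation "pw u k \<equiv> apow a e1 u k"
abbreviation "PP k u y \<equiv> aP a e1 k u y"

lemma Qpow: "m (m u u) (pw u k) = pw u (Suc (Suc k))"
proof (induction k)
  case 0
  then show ?case using munit[of u] mcomm[of u E] munit[of "m u u"] mcomm[of "m u u" E] by simp
next
  case (Suc k)
  have "m (m u u) (pw u (Suc k)) = m (m u u) (m u (pw u k))" by simp
  also have "\<dots> = m u (m (m u u) (pw u k))" by (rule JL)
  also have "\<dots> = pw u (Suc (Suc (Suc k)))" using Suc by simp
  finally show ?case .
qed

lemma Kpow2: "(\<forall>y. m (pw u k) (m u y) = m u (m (pw u k) y)) \<and> (\<forall>y. m (pw u (Suc k)) (m u y) = m u (m (pw u (Suc k)) y))"
proof (induction k)
  case 0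
  have "pw u (Suc 0) = u" by (rule apow1)
  then show ?case by (simp only: apow.simps(1) munit, simp)
next
  case (Suc k)
  hence K0: "\<And>y. m (pw u k) (m u y) = m u (m (pw u k) y)"
    and K1: "\<And>y. m (pw u (Suc k)) (m u y) = m u (m (pw u (Suc k)) y)" by auto
  let ?p = "pw u k" and ?p1 = "pw u (Suc k)" and ?q = "m u u"
  have p2: "pw u (Suc (Suc k)) = m ?p ?q" using Qpow[of u k] mcomm[of ?p ?q] by (simp only:)
  have up: "m u ?p = ?p1" by simp
  have pol: "m (m ?p ?q) z = m ?q (m ?p z) + m ?p1 (m u z) + m ?p1 (m u z) - m u (m ?p (m u z)) - m u (m ?p (m u z))" for z
    using polar[of ?p u z] by (simp only: up)
  have "m (pw u (Suc (Suc k))) (m u y) = m u (m (pw u (Suc (Suc k))) y)" for y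
  proof -
    have "m (pw u (Suc (Suc k))) (m u y) = m ?q (m ?p (m u y)) + m ?p1 (m u (m u y)) + m ?p1 (m u (m u y)) - m u (m ?p (m u (m u y))) - m u (m ?p (m u (m u y)))"
      unfolding p2 by (rule pol)
    also have "\<dots> = m u (m ?q (m ?p y)) + m u (m ?p1 (m u y)) + m u (m ?p1 (m u y)) - m u (m u (m ?p (m u y))) - m u (m u (m ?p (m u y)))"
      by (simp only: K0 K1 JL)
    also have "\<dots> = m u (m ?q (m ?p y) + m ?p1 (m u y) + m ?p1 (m u y) - m u (m ?p (m u y)) - m u (m ?p (m u y)))"
      by (simp only: m_add_right m_diff_right)
    also have "\<dots> = m u (m (pw u (Suc (Suc k))) y)"
      unfolding p2 pol ..
    finally show ?thesis .
  qed
  with K1 show ?case by simp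
qed

lemma Kpow: "m (pw u k) (m u y) = m u (m (pw u k) y)"
  using Kpow2 by blast

lemma Ccomm: "PP k u (m u y) = m u (PP k u y)"
proof (induction k)
  case 0
  then show ?case by (simp add: m_zero_right)
next
  case (Suc k)
  have "PP (Suc k) u (m u y) = m (m u y) (pw u k) + m u (PP k u (m u y))" by simp
  also have "\<dots> = m u (m (pw u k) y) + m u (m u (PP k u y))"
    using Suc Kpow[of u k y] mcomm[of "m u y" "pw u k"] by simp
  also have "\<dots> = m u (PP (Suc k) u y)"
    by (simp add: m_add_right mcomm[of y "pw u k"])
  finally show ?case .
qed

lemma SA: "ip (PP k u x) y = ip x (PP k u y)"
proof (induction k arbitrary: x y)
  case 0
  then show ?case by (simp add: ip_zero_left ip_zero_right)
next
  case (Suc k)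
  have "ip (PP (Suc k) u x) y = ip (m x (pw u k)) y + ip (m u (PP k u x)) y"
    by (simp add: ip_add_left)
  also have "\<dots> = ip x (m (pw u k) y) + ip (PP k u x) (m u y)"
    by (simp only: frobv[of x "pw u k" y] selfadj[of u "PP k u x" y])
  also have "\<dots> = ip x (m y (pw u k)) + ip x (m u (PP k u y))"
    using Suc Ccomm by (simp add: mcomm[of y "pw u k"])
  also have "\<dots> = ip x (PP (Suc k) u y)" by (simp add: ip_add_right)
  finally show ?case .
qed

lemma grad: "ip E (PP (Suc k) u y) = real (Suc k) * ip (pw u k) y"
proof -
  have "ip E (PP (Suc k) u y) = ip E (m y (pw u k)) + ip E (m u (PP k u y))"
    by (simp add: ip_add_right)
  also have "\<dots> = ip y (pw u k) + ip u (PP k u y)"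
    by (simp add: frob_rev munit)
  also have "\<dots> = ip (pw u k) y + real k * ip (pw u k) y"
    using SA[of k u u y] euler[of k u] by (simp add: ipsym[of y] ip_scale_left)
  finally show ?thesis by (simp add: algebra_simps)
qed

lemma hform: "hdens a \<eta> e1 (Suc n) = (\<lambda>u. fact n * ip E (pw u (Suc n)))"
proof (induction n)
  case 0
  show ?case using apow1 by (simp add: ip_unit fun_eq_iff)
next
  case (Suc n)
  have d: "(hdens a \<eta> e1 (Suc n) has_derivative (\<lambda>y. fact n * ip E (PP (Suc n) u y))) (at u)" for u
    unfolding Suc
    by (intro has_derivative_mult_right bounded_linear.has_derivative[OF bounded_bilinear.bounded_linear_right[OF ip_bb]] apow_deriv)
  show ?case
  proof
    fix u
    have "hdens a \<eta> e1 (Suc (Suc n)) u = fact n * ip E (PP (Suc n) u (m u u))"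
      using hstep[OF d] by simp
    also have "\<dots> = fact n * (real (Suc n) * ip (pw u n) (m u u))" by (simp only: grad)
    also have "ip (pw u n) (m u u) = ip E (pw u (Suc (Suc n)))"
    proof -
      have "ip (pw u n) (m u u) = ip (m (pw u n) u) u" by (rule frob_rev)
      also have "\<dots> = ip u (pw u (Suc n))" by (simp only: mcomm[of "pw u n" u] ipsym[of _ u] apow.simps)
      also have "\<dots> = ip (m E u) (pw u (Suc n))" by (simp only: munit)
      also have "\<dots> = ip E (m u (pw u (Suc n)))" by (rule frobv)
      finally show ?thesis by (simp only: apow.simps)
    qed
    finally show "hdens a \<eta> e1 (Suc (Suc n)) u = fact (Suc n) * ip E (pw u (Suc (Suc n)))"
      by (simp add: algebra_simps)
  qed
qed

end

context jalg begin

lemma jordan_conserved: "conserved_density a (hdens a \<eta> e1 (Suc n))"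
proof -
  let ?c = "fact n * real (Suc n)"
  have d: "(hdens a \<eta> e1 (Suc n) has_derivative (\<lambda>y. fact n * ip E (PP (Suc n) u y))) (at u)" for u
    unfolding hform
    by (intro has_derivative_mult_right bounded_linear.has_derivative[OF bounded_bilinear.bounded_linear_right[OF ip_bb]] apow_deriv)
  have pd: "pdiff p (hdens a \<eta> e1 (Suc n)) = (\<lambda>u. ?c * ip (pw u n) (axis p 1))" for p
    using pdiff_fun[OF d] by (simp only: grad mult.assoc)
  have d2: "(pdiff p (hdens a \<eta> e1 (Suc n)) has_derivative (\<lambda>y. ?c * ip (PP n u y) (axis p 1))) (at u)" for p u
    unfolding pd
    by (intro has_derivative_mult_right bounded_linear.has_derivative[OF bounded_bilinear.bounded_linear_left[OF ip_bb]] apow_deriv)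
  show ?thesis
    unfolding conserved_density_def
  proof (intro allI)
    fix u k p
    have "(\<Sum>i\<in>UNIV. \<Sum>j\<in>UNIV. a i j k * u$j * pdiff i (pdiff p (hdens a \<eta> e1 (Suc n))) u)
        = ?c * ip (PP n u (m u (axis k 1))) (axis p 1)" by (rule cstep[OF d2])
    also have "ip (PP n u (m u (axis k 1))) (axis p 1) = ip (PP n u (m u (axis p 1))) (axis k 1)"
    proof -
      have "ip (PP n u (m u (axis k 1))) (axis p 1) = ip (m u (PP n u (axis k 1))) (axis p 1)" by (simp only: Ccomm)
      also have "\<dots> = ip (PP n u (axis k 1)) (m u (axis p 1))" by (rule selfadj)
      also have "\<dots> = ip (axis k 1) (PP n u (m u (axis p 1)))" by (rule SA)
      finally show ?thesis by (simp only: ipsym[of "axis k 1"])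
    qed
    also have "?c * ip (PP n u (m u (axis p 1))) (axis k 1) = (\<Sum>i\<in>UNIV. \<Sum>j\<in>UNIV. a i j p * u$j * pdiff i (pdiff k (hdens a \<eta> e1 (Suc n))) u)"
      by (rule cstep[OF d2, symmetric])
    finally show "(\<Sum>i\<in>UNIV. \<Sum>j\<in>UNIV. a i j k * u$j * pdiff i (pdiff p (hdens a \<eta> e1 (Suc n))) u)
       = (\<Sum>i\<in>UNIV. \<Sum>j\<in>UNIV. a i j p * u$j * pdiff i (pdiff k (hdens a \<eta> e1 (Suc n))) u)" .
  qed
qed

end

lemma ip_two_right: "ipf \<eta> z (2 * (v::real^'n::finite)) = 2 * ipf \<eta> z v"
  by (simp add: ipf_def sum_distrib_left algebra_simps)
lemma ip_two_left: "ipf \<eta> (2 * (v::real^'n::finite)) z = 2 * ipf \<eta> v z"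
  by (simp add: ipf_def sum_distrib_left algebra_simps)

context falg begin

lemma dmm: "((\<lambda>u. m u u) has_derivative (\<lambda>h. m u h + m h u)) (at u)"
  using bounded_bilinear.FDERIV[OF m_bb has_derivative_ident has_derivative_ident] .

lemma h1: "hdens a \<eta> e1 (Suc 0) = (\<lambda>u. ip E u)"
  by (simp add: ip_unit fun_eq_iff)

lemma h2: "hdens a \<eta> e1 (Suc (Suc 0)) = (\<lambda>u. ip u u)"
proof -
  have "(hdens a \<eta> e1 (Suc 0) has_derivative (\<lambda>y. ip E y)) (at u)" for u
    unfolding h1 by (rule bounded_linear.has_derivative[OF bounded_bilinear.bounded_linear_right[OF ip_bb] has_derivative_ident])
  from hstep[OF this] show ?thesis by (simp add: frob_rev munit)
qed

lemma h3: "hdens a \<eta> e1 (Suc (Suc (Suc 0))) = (\<lambda>u. 2 * ip u (m u u))"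
proof -
  have "(hdens a \<eta> e1 (Suc (Suc 0)) has_derivative (\<lambda>y. ip u y + ip y u)) (at u)" for u
    unfolding h2 by (rule bounded_bilinear.FDERIV[OF ip_bb has_derivative_ident has_derivative_ident])
  from hstep[OF this] show ?thesis by (simp add: fun_eq_iff ipsym[of "m _ _"])
qed

lemma h4: "hdens a \<eta> e1 (Suc (Suc (Suc (Suc 0)))) = (\<lambda>u. 6 * ip (m u u) (m u u))"
proof -
  have "(hdens a \<eta> e1 (Suc (Suc (Suc 0))) has_derivative (\<lambda>y. 2 * (ip u (m u y + m y u) + ip y (m u u)))) (at u)" for u
    unfolding h3 by (intro has_derivative_mult_right bounded_bilinear.FDERIV[OF ip_bb has_derivative_ident dmm])
  from hstep[OF this] have "hdens a \<eta> e1 (Suc (Suc (Suc (Suc 0)))) =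
     (\<lambda>u. 2 * (ip u (m u (m u u) + m (m u u) u) + ip (m u u) (m u u)))" .
  also have "\<dots> = (\<lambda>u. 6 * ip (m u u) (m u u))"
  proof
    fix u
    have "m (m u u) u = m u (m u u)" by (rule mcomm)
    moreover have "ip u (m u (m u u)) = ip (m u u) (m u u)" by (rule frob_rev)
    ultimately show "2 * (ip u (m u (m u u) + m (m u u) u) + ip (m u u) (m u u)) = 6 * ip (m u u) (m u u)"
      by (simp add: ip_add_right ip_two_right)
  qed
  finally show ?thesis .
qed

lemma h4_cons_imp:
  assumes "conserved_density a (hdens a \<eta> e1 4)"
  shows "ip (m (m u u) (m u (axis k 1)) - m u (m (m u u) (axis k 1))) (axis p 1) = 0"
proof -
  let ?h = "hdens a \<eta> e1 4"
  have h4': "?h = (\<lambda>u. 6 * ip (m u u) (m u u))"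
    using h4 by (simp add: numeral_eq_Suc)
  have d: "(?h has_derivative (\<lambda>y. 6 * (ip (m u u) (m u y + m y u) + ip (m u y + m y u) (m u u)))) (at u)" for u
    unfolding h4' by (intro has_derivative_mult_right bounded_bilinear.FDERIV[OF ip_bb dmm dmm])
  have pd: "pdiff q ?h = (\<lambda>u. 24 * ip (m u u) (m u (axis q 1)))" for q
  proof -
    have "pdiff q ?h = (\<lambda>u. 6 * (ip (m u u) (m u (axis q 1) + m (axis q 1) u) + ip (m u (axis q 1) + m (axis q 1) u) (m u u)))"
      by (rule pdiff_fun[OF d])
    also have "\<dots> = (\<lambda>u. 24 * ip (m u u) (m u (axis q 1)))"
      by (simp add: fun_eq_iff mcomm[of "axis q 1"] ip_add_left ip_add_right ip_two_right ip_two_left ipsym[of _ "m u u" for u])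
    finally show ?thesis .
  qed
  have dm2: "((\<lambda>u. m u (axis q 1)) has_derivative (\<lambda>h. m u 0 + m h (axis q 1))) (at u)" for q u
    by (rule bounded_bilinear.FDERIV[OF m_bb has_derivative_ident has_derivative_const])
  have d2: "(pdiff q ?h has_derivative (\<lambda>y. 24 * (ip (m u u) (m u 0 + m y (axis q 1)) + ip (m u y + m y u) (m u (axis q 1))))) (at u)" for q u
    unfolding pd by (intro has_derivative_mult_right bounded_bilinear.FDERIV[OF ip_bb dmm dm2])
  define ek where "ek = (axis k 1 :: real^'n)"
  define ep where "ep = (axis p 1 :: real^'n)"
  have L: "(\<Sum>i\<in>UNIV. \<Sum>j\<in>UNIV. a i j k' * u$j * pdiff i (pdiff p' ?h) u)
      = 24 * (ip (m (m u u) (m u (axis k' 1))) (axis p' 1) + 2 * ip (m u (m u (axis k' 1))) (m u (axis p' 1)))" for k' p'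
  proof -
    have "(\<Sum>i\<in>UNIV. \<Sum>j\<in>UNIV. a i j k' * u$j * pdiff i (pdiff p' ?h) u)
      = 24 * (ip (m u u) (m u 0 + m (m u (axis k' 1)) (axis p' 1)) + ip (m u (m u (axis k' 1)) + m (m u (axis k' 1)) u) (m u (axis p' 1)))"
      by (rule cstep[OF d2])
    also have "\<dots> = 24 * (ip (m u u) (m (m u (axis k' 1)) (axis p' 1)) + 2 * ip (m u (m u (axis k' 1))) (m u (axis p' 1)))"
      by (simp add: m_zero_right ip_add_left ip_two_left mcomm[of "m u (axis k' 1)" u])
    also have "ip (m u u) (m (m u (axis k' 1)) (axis p' 1)) = ip (m (m u u) (m u (axis k' 1))) (axis p' 1)"
      by (rule frob_rev)
    finally show ?thesis .
  qed
  have T2: "ip (m u (m u ek)) (m u ep) = ip (m u (m u ep)) (m u ek)"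
    by (simp add: selfadj[of u "m u ek"] ipsym[of "m u ek"])
  have T1: "ip (m (m u u) (m u ep)) ek = ip (m u (m (m u u) ek)) ep"
  proof -
    have "ip (m (m u u) (m u ep)) ek = ip (m u u) (m (m u ep) ek)" by (rule frobv)
    also have "\<dots> = ip (m u u) (m ek (m u ep))" by (simp only: mcomm[of "m u ep" ek])
    also have "\<dots> = ip (m (m u u) ek) (m u ep)" by (rule frob_rev)
    also have "\<dots> = ip (m u (m (m u u) ek)) ep" by (simp only: selfadj ipsym[of "m (m u u) ek"])
    finally show ?thesis .
  qed
  have "(\<Sum>i\<in>UNIV. \<Sum>j\<in>UNIV. a i j k * u$j * pdiff i (pdiff p ?h) u) = (\<Sum>i\<in>UNIV. \<Sum>j\<in>UNIV. a i j p * u$j * pdiff i (pdiff k ?h) u)"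
    using assms unfolding conserved_density_def by blast
  hence "ip (m (m u u) (m u ek)) ep + 2 * ip (m u (m u ek)) (m u ep) = ip (m (m u u) (m u ep)) ek + 2 * ip (m u (m u ep)) (m u ek)"
    unfolding L ek_def ep_def by simp
  hence "ip (m (m u u) (m u ek)) ep = ip (m u (m (m u u) ek)) ep" using T1 T2 by simp
  thus ?thesis unfolding ek_def ep_def by (simp add: ip_diff_left)
qed

end

lemma nondeg_zero:
  fixes \<eta> :: "'n::finite \<Rightarrow> 'n \<Rightarrow> real"
  assumes nd: "det (\<chi> i j. \<eta> i j) \<noteq> 0" and z: "\<And>p. ipf \<eta> v (axis p 1) = 0"
  shows "v = 0"
proof -
  let ?H = "(\<chi> i j. \<eta> i j) :: real^'n^'n"
  have "(v v* ?H)$p = ipf \<eta> v (axis p 1)" for p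
  proof -
    have "ipf \<eta> v (axis p 1) = (\<Sum>i\<in>UNIV. \<Sum>j\<in>UNIV. \<eta> i j * v$i * (axis p 1 :: real^'n)$j)"
      by (simp add: ipf_def)
    also have "\<dots> = (\<Sum>i\<in>UNIV. \<eta> i p * v$i)"
      by (rule sum.cong[OF refl], rule axis_sum')
    finally show ?thesis by (simp add: vector_matrix_mult_def mult.commute)
  qed
  hence vH: "v v* ?H = 0" using z by (simp add: vec_eq_iff)
  have "invertible ?H" using nd invertible_det_nz by blast
  then obtain B where B: "?H ** B = mat 1" unfolding invertible_def by blast
  have "v = v v* (?H ** B)" using B by simp
  also have "\<dots> = (v v* ?H) v* B" by (simp add: vector_matrix_mul_assoc)
  also have "\<dots> = 0" using vH by (simp add: vector_matrix_mult_def vec_eq_iff)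
  finally show ?thesis .
qed

theorem proposition3:
  fixes a :: "'n::finite \<Rightarrow> 'n \<Rightarrow> 'n \<Rightarrow> real" and \<eta> :: "'n \<Rightarrow> 'n \<Rightarrow> real" and e1 :: 'n
  assumes comm: "\<forall>k i j. a k i j = a k j i"
    and unity: "\<forall>k j. a k e1 j = (if k = j then 1 else 0)"
    and sym: "\<forall>i j. \<eta> i j = \<eta> j i"
    and nondeg: "det (\<chi> i j. \<eta> i j) \<noteq> 0"
    and frob: "\<forall>i j k. (\<Sum>l\<in>UNIV. a l i j * \<eta> l k) = (\<Sum>l\<in>UNIV. \<eta> i l * a l j k)"
  shows "is_jordan a \<longleftrightarrow> (\<forall>n\<ge>1. conserved_density a (hdens a \<eta> e1 n))"
proof -
  interpret falg a \<eta> e1 using comm unity sym frob by unfold_locales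
  show ?thesis
  proof
    assume J: "is_jordan a"
    interpret jalg a \<eta> e1 using J by unfold_locales
    show "\<forall>n\<ge>1. conserved_density a (hdens a \<eta> e1 n)"
    proof (intro allI impI)
      fix n :: nat assume "n \<ge> 1"
      then obtain n' where "n = Suc n'" by (cases n) auto
      thus "conserved_density a (hdens a \<eta> e1 n)" using jordan_conserved by simp
    qed
  next
    assume "\<forall>n\<ge>1. conserved_density a (hdens a \<eta> e1 n)"
    hence C4: "conserved_density a (hdens a \<eta> e1 4)" by simp
    have key: "m (m u u) (m u y) = m u (m (m u u) y)" for u y
    proof (rule lin_ext[of "\<lambda>y. m (m u u) (m u y)" "\<lambda>y. m u (m (m u u) y)"])
      show "linear (\<lambda>y. m (m u u) (m u y))" "linear (\<lambda>y. m u (m (m u u) y))"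
        using m_bilinear unfolding bilinear_def by (auto intro: linear_compose[unfolded o_def])
      fix k
      have "m (m u u) (m u (axis k 1)) - m u (m (m u u) (axis k 1)) = 0"
        by (rule nondeg_zero[OF nondeg]) (rule h4_cons_imp[OF C4])
      thus "m (m u u) (m u (axis k 1)) = m u (m (m u u) (axis k 1))" by simp
    qed
    show "is_jordan a"
      unfolding is_jordan_def
    proof (intro allI)
      fix x y
      have "m (m x y) (m x x) = m (m x x) (m x y)" by (rule mcomm)
      also have "\<dots> = m x (m (m x x) y)" by (rule key)
      also have "\<dots> = m x (m y (m x x))" by (simp only: mcomm[of "m x x" y])
      finally show "m (m x y) (m x x) = m x (m y (m x x))" .
    qed
  qed
qed

end
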